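(* Let $\mathcal{M}$ be a finite $\mathcal{R}$-trivial monoid with $n=\#\mathcal{M}$, with elements ordered so that $\#\sigma_1\mathcal{M}\ge\dots\ge\#\sigma_n\mathcal{M}$ (so all elements of $\mathcal{U}^{\mathbb{Z}}_{\mathcal{M}}$ are upper triangular). Then: (1) Every idempotent element of $\mathcal{U}^{\mathbb{Z}}_{\mathcal{M}}$ has only entries $0$ and $1$ on its diagonal. (2) If $E\in\mathcal{U}^{\mathbb{Z}}_{\mathcal{M}}$ is idempotent and $\mathcal{D}_E$ is a single equivalence class of the loop-type relation $\sim$, then $E$ is primitive in $\mathcal{U}^{\mathbb{Z}}_{\mathcal{M}}$: whenever $E=X+Y$ with $X,Y\in\mathcal{U}^{\mathbb{Z}}_{\mathcal{M}}$, $X^2=X$, $Y^2=Y$, $XY=YX=0$, then $X=0$ or $Y=0$. (3) If $U\in\mathcal{U}^{\mathbb{Z}}_{\mathcal{M}}$ has only entries $0$ and $1$ on its diagonal, and $a,b\in\mathbb{Z}_{\ge0}$ satisfy $a\ge n-d_U$ and $b\ge d_U$, then $\mathcal{P}_{a,b}(U)=\mathrm{Id}-(\mathrm{Id}-U^a)^b$ is idempotent and has the same diagonal as $U$.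
   Context: $\mathcal{M}$ is $\mathcal{R}$-trivial: $\sigma\mathcal{M}=\tau\mathcal{M}$ implies $\sigma=\tau$. Matrices in $\mathrm{Mat}(\mathbb{Z},n)$ are indexed by elements of $\mathcal{M}$ according to the chosen ordering. $U_\sigma$ is the matrix with $(U_\sigma)_{\tau,\kappa}=1$ if $\tau\sigma=\kappa$ and $0$ otherwise; $\mathcal{U}^{\mathbb{Z}}_{\mathcal{M}}:=\{\sum_{\mu\in\mathcal{M}} r_\mu U_\mu : r_\mu\in\mathbb{Z}\}\subset\mathrm{Mat}(\mathbb{Z},n)$ (a subring isomorphic to the monoid ring $\mathbb{Z}\mathcal{M}$ via $\mu\mapsto U_\mu$). For $U\in\mathcal{U}^{\mathbb{Z}}_{\mathcal{M}}$: $\mathcal{D}_U:=\{\sigma\in\mathcal{M}: U_{\sigma,\sigma}=1\}$ and $d_U:=\#\mathcal{D}_U$. $\mathcal{L}_\sigma:=\{\tau:\sigma\tau=\sigma\}$, and $\sigma\sim\kappa$ (same loop-type) iff $\mathcal{L}_\sigma=\mathcal{L}_\kappa$. $\mathcal{P}_{a,b}(U):=\mathrm{Id}-(\mathrm{Id}-U^a)^b$ for $a,b\in\mathbb{Z}_{\ge 0}$. *)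

theory Defs
  imports Main
begin

text \<open>Integer matrices indexed by the elements of the monoid are functions
'm => 'm => int (row index, column index). The ordering of the elements
only serves to make the matrices upper triangular; none of the claims
depends on it.\<close>

type_synonym 'm imat = "'m \<Rightarrow> 'm \<Rightarrow> int"

definition R_trivial :: "('m::monoid_mult) itself \<Rightarrow> bool" where
  "R_trivial _ \<longleftrightarrow> (\<forall>\<sigma> \<tau> :: 'm. range (\<lambda>x. \<sigma> * x) = range (\<lambda>x. \<tau> * x) \<longrightarrow> \<sigma> = \<tau>)"

definition mmul :: "('m::finite) imat \<Rightarrow> 'm imat \<Rightarrow> 'm imat" where
  "mmul A B = (\<lambda>i k. \<Sum>j\<in>UNIV. A i j * B j k)"

definition madd :: "'m imat \<Rightarrow> 'm imat \<Rightarrow> 'm imat" where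
  "madd A B = (\<lambda>i j. A i j + B i j)"

definition msub :: "'m imat \<Rightarrow> 'm imat \<Rightarrow> 'm imat" where
  "msub A B = (\<lambda>i j. A i j - B i j)"

definition mzero :: "'m imat" where
  "mzero = (\<lambda>i j. 0)"

definition mId :: "'m imat" where
  "mId = (\<lambda>i j. if i = j then 1 else 0)"

primrec mpow :: "('m::finite) imat \<Rightarrow> nat \<Rightarrow> 'm imat" where
  "mpow A 0 = mId"
| "mpow A (Suc k) = mmul (mpow A k) A"

definition Umat :: "('m::monoid_mult) \<Rightarrow> 'm imat" where
  "Umat \<sigma> = (\<lambda>\<tau> \<kappa>. if \<tau> * \<sigma> = \<kappa> then 1 else 0)"

definition UZ :: "('m::{monoid_mult,finite}) imat set" where
  "UZ = {A. \<exists>r :: 'm \<Rightarrow> int. A = (\<lambda>i j. \<Sum>\<mu>\<in>UNIV. r \<mu> * Umat \<mu> i j)}"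

definition idempotent_mat :: "('m::finite) imat \<Rightarrow> bool" where
  "idempotent_mat A \<longleftrightarrow> mmul A A = A"

definition Dset :: "'m imat \<Rightarrow> 'm set" where
  "Dset U = {\<sigma>. U \<sigma> \<sigma> = 1}"

definition dnum :: "'m imat \<Rightarrow> nat" where
  "dnum U = card (Dset U)"

definition Lset :: "('m::monoid_mult) \<Rightarrow> 'm set" where
  "Lset \<sigma> = {\<tau>. \<sigma> * \<tau> = \<sigma>}"

definition loop_equiv :: "('m::monoid_mult) \<Rightarrow> 'm \<Rightarrow> bool" where
  "loop_equiv \<sigma> \<kappa> \<longleftrightarrow> Lset \<sigma> = Lset \<kappa>"

definition Pab :: "nat \<Rightarrow> nat \<Rightarrow> ('m::finite) imat \<Rightarrow> 'm imat" where
  "Pab a b U = msub mId (mpow (msub mId (mpow U a)) b)"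

end

theory Submission imports Defs "HOL-Computational_Algebra.Polynomial" begin

typedef 'm sq = "UNIV :: ('m \<Rightarrow> 'm \<Rightarrow> int) set" by simp
setup_lifting type_definition_sq

lemma mmul_assoc: "mmul (mmul A B) C = mmul A (mmul (B::('m::finite) imat) C)"
proof (rule ext, rule ext)
  fix i l
  have "mmul (mmul A B) C i l = (\<Sum>k\<in>UNIV. \<Sum>j\<in>UNIV. A i j * B j k * C k l)"
    unfolding mmul_def by (simp add: sum_distrib_right)
  also have "\<dots> = (\<Sum>j\<in>UNIV. \<Sum>k\<in>UNIV. A i j * B j k * C k l)"
    by (rule sum.swap)
  also have "\<dots> = mmul A (mmul B C) i l"
    unfolding mmul_def by (simp add: sum_distrib_left mult.assoc)
  finally show "mmul (mmul A B) C i l = mmul A (mmul B C) i l" .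
qed

lemma mId_left: "mmul mId A = (A::('m::finite) imat)"
  unfolding mmul_def mId_def by (simp add: fun_eq_iff if_distrib[where f="\<lambda>x. x * _"] cong: if_cong)
lemma mId_right: "mmul A mId = (A::('m::finite) imat)"
  unfolding mmul_def mId_def by (simp add: fun_eq_iff if_distrib[where f="\<lambda>x. _ * x"] cong: if_cong)

instantiation sq :: (finite) ring_1
begin
lift_definition zero_sq :: "'a sq" is mzero .
lift_definition one_sq :: "'a sq" is mId .
lift_definition plus_sq :: "'a sq \<Rightarrow> 'a sq \<Rightarrow> 'a sq" is madd .
lift_definition minus_sq :: "'a sq \<Rightarrow> 'a sq \<Rightarrow> 'a sq" is msub .
lift_definition uminus_sq :: "'a sq \<Rightarrow> 'a sq" is "\<lambda>A i j. - A i j" .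
lift_definition times_sq :: "'a sq \<Rightarrow> 'a sq \<Rightarrow> 'a sq" is mmul .
instance
proof
  fix a b c :: "'a sq"
  show "a * b * c = a * (b * c)" by transfer (rule mmul_assoc)
  show "a + b + c = a + (b + c)" by transfer (simp add: madd_def fun_eq_iff algebra_simps)
  show "a + b = b + a" by transfer (simp add: madd_def fun_eq_iff algebra_simps)
  show "0 + a = a" by transfer (auto simp: madd_def mzero_def)
  show "- a + a = 0" by transfer (auto simp: madd_def mzero_def)
  show "a - b = a + - b" by transfer (auto simp: madd_def msub_def)
  show "1 * a = a" by transfer (rule mId_left)
  show "a * 1 = a" by transfer (rule mId_right)
  show "(a + b) * c = a * c + b * c" by transfer (auto simp: mmul_def madd_def distrib_right sum.distrib)
  show "a * (b + c) = a * b + a * c" by transfer (auto simp: mmul_def madd_def distrib_left sum.distrib)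
  show "(0::'a sq) \<noteq> 1" apply transfer apply (auto simp: mzero_def mId_def fun_eq_iff) done
qed
end

lemma Rep_zero: "Rep_sq (0::'m::finite sq) = mzero"
  by transfer rule
lemma Rep_pow: "Rep_sq (A ^ k) = mpow (Rep_sq A) k"
  by (induction k) (auto simp del: power_Suc simp add: power_Suc2 times_sq.rep_eq one_sq.rep_eq)

definition peval :: "int poly \<Rightarrow> 'r::ring_1 \<Rightarrow> 'r" where
  "peval p X = (\<Sum>i\<le>degree p. of_int (coeff p i) * X^i)"

lemma peval_le: "degree p \<le> N \<Longrightarrow> peval p X = (\<Sum>i\<le>N. of_int (coeff p i) * X^i)"
  unfolding peval_def
  by (rule sum.mono_neutral_left) (auto simp: coeff_eq_0)

lemma peval_add: "peval (p + q) X = peval p X + peval q X"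
proof -
  let ?N = "max (degree p) (degree q)"
  have "degree (p+q) \<le> ?N" by (rule degree_add_le_max)
  then show ?thesis
    by (simp add: peval_le[of "p+q" ?N] peval_le[of p ?N] peval_le[of q ?N] sum.distrib distrib_right)
qed

lemma peval_smult: "peval (smult a p) X = of_int a * peval p X"
  by (simp add: peval_le[of "smult a p" "degree p"] peval_def sum_distrib_left mult.assoc)

lemma peval_0[simp]: "peval 0 X = 0"
  by (simp add: peval_def)

lemma peval_pCons: "peval (pCons a p) X = of_int a + X * peval p X"
proof -
  have "peval (pCons a p) X = (\<Sum>i\<le>Suc (degree p). of_int (coeff (pCons a p) i) * X^i)"
    by (rule peval_le) (simp add: degree_pCons_le)
  also have "\<dots> = of_int a + (\<Sum>i\<le>degree p. of_int (coeff p i) * X^Suc i)"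
    by (simp only: sum.atMost_Suc_shift) simp
  also have "(\<Sum>i\<le>degree p. of_int (coeff p i) * X^Suc i) = X * peval p X"
    unfolding peval_def sum_distrib_left
    by (rule sum.cong) (simp_all, metis mult.assoc mult_of_int_commute)
  finally show ?thesis .
qed

lemma peval_mult: "peval (p * q) X = peval p X * peval q X"
proof (induction p rule: pCons_induct)
  case 0
  then show ?case by simp
next
  case (pCons a p)
  have "peval (pCons a p * q) X = peval (smult a q + pCons 0 (p * q)) X" by simp
  also have "\<dots> = of_int a * peval q X + X * (peval p X * peval q X)"
    by (simp add: peval_add peval_smult peval_pCons pCons.IH)
  also have "\<dots> = peval (pCons a p) X * peval q X"
    by (simp add: peval_pCons distrib_right mult.assoc)
  finally show ?case .
qed

lemma peval_1[simp]: "peval 1 X = 1"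
  by (simp add: peval_def)

lemma peval_x: "peval [:0,1:] X = X"
  by (simp add: peval_pCons)

lemma peval_uminus: "peval (- p) X = - peval p X"
proof -
  have "peval (p + - p) X = 0" by simp
  then show ?thesis by (simp only: peval_add) (simp add: add_eq_0_iff)
qed

lemma peval_diff: "peval (p - q) X = peval p X - peval q X"
  using peval_add[of p "-q" X] by (simp add: peval_uminus)

lemma peval_power: "peval (p ^ k) X = peval p X ^ k"
  by (induction k) (simp_all add: peval_mult)

definition tri :: "('m::monoid_mult) imat \<Rightarrow> bool" where
  "tri A \<longleftrightarrow> (\<forall>\<tau> \<kappa>. A \<tau> \<kappa> \<noteq> 0 \<longrightarrow> \<kappa> \<in> range ((*) \<tau>))"

lemma UZ_tri: "A \<in> (UZ :: ('m::{monoid_mult,finite}) imat set) \<Longrightarrow> tri A"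
proof -
  assume "A \<in> UZ"
  then obtain r :: "'m \<Rightarrow> int" where A: "A = (\<lambda>i j. \<Sum>\<mu>\<in>UNIV. r \<mu> * Umat \<mu> i j)"
    unfolding UZ_def by blast
  show "tri A" unfolding tri_def
  proof (intro allI impI)
    fix \<tau> \<kappa> assume "A \<tau> \<kappa> \<noteq> 0"
    then have "(\<Sum>\<mu>\<in>UNIV. r \<mu> * Umat \<mu> \<tau> \<kappa>) \<noteq> 0" by (simp add: A)
    then obtain \<mu> where "r \<mu> * Umat \<mu> \<tau> \<kappa> \<noteq> 0" by (meson sum.neutral)
    then have "\<tau> * \<mu> = \<kappa>" by (auto simp: Umat_def split: if_splits)
    then show "\<kappa> \<in> range ((*) \<tau>)" by blast
  qed
qed

lemma UZ_diag: "A \<in> (UZ :: ('m::{monoid_mult,finite}) imat set) \<Longrightarrow> Lset \<sigma> = Lset \<kappa> \<Longrightarrow> A \<sigma> \<sigma> = A \<kappa> \<kappa>"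
proof -
  assume "A \<in> UZ" and L: "Lset \<sigma> = Lset \<kappa>"
  then obtain r :: "'m \<Rightarrow> int" where A: "A = (\<lambda>i j. \<Sum>\<mu>\<in>UNIV. r \<mu> * Umat \<mu> i j)"
    unfolding UZ_def by blast
  have "(\<sigma> * \<mu> = \<sigma>) = (\<kappa> * \<mu> = \<kappa>)" for \<mu>
  proof -
    have "(\<mu> \<in> Lset \<sigma>) = (\<mu> \<in> Lset \<kappa>)" using L by simp
    then show ?thesis by (simp add: Lset_def)
  qed
  then show ?thesis by (simp add: A Umat_def)
qed

lemma Rtriv_eq:
  assumes R: "R_trivial TYPE('m::monoid_mult)"
  and "(j::'m) \<in> range ((*) \<sigma>)" "\<sigma> \<in> range ((*) j)"
  shows "j = \<sigma>"
proof -
  have sub: "range ((*) a) \<subseteq> range ((*) b)" if "a \<in> range ((*) b)" for a b :: 'm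
    using that by (auto simp: mult.assoc)
  have "range ((*) j) = range ((*) \<sigma>)" using sub assms(2,3) by blast
  then show ?thesis using R unfolding R_trivial_def by blast
qed

lemma tri_mult: "tri A \<Longrightarrow> tri B \<Longrightarrow> tri (mmul A (B::('m::{monoid_mult,finite}) imat))"
  unfolding tri_def mmul_def
proof (intro allI impI)
  fix \<tau> \<kappa>
  assume a: "\<forall>\<tau> \<kappa>. A \<tau> \<kappa> \<noteq> 0 \<longrightarrow> \<kappa> \<in> range ((*) \<tau>)"
    and b: "\<forall>\<tau> \<kappa>. B \<tau> \<kappa> \<noteq> 0 \<longrightarrow> \<kappa> \<in> range ((*) \<tau>)"
    and "(\<Sum>j\<in>UNIV. A \<tau> j * B j \<kappa>) \<noteq> 0"
  then obtain j where "A \<tau> j * B j \<kappa> \<noteq> 0" by (meson sum.neutral)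
  then have "j \<in> range ((*) \<tau>)" "\<kappa> \<in> range ((*) j)" using a b by auto
  then show "\<kappa> \<in> range ((*) \<tau>)" by (auto simp: mult.assoc)
qed

lemma tri_mId: "tri (mId :: ('m::monoid_mult) imat)"
  unfolding tri_def mId_def by (auto intro: range_eqI[where x=1])

lemma tri_msub: "tri A \<Longrightarrow> tri B \<Longrightarrow> tri (msub A B)"
  unfolding tri_def msub_def by (metis diff_zero diff_self)

lemma tri_mpow: "tri A \<Longrightarrow> tri (mpow (A::('m::{monoid_mult,finite}) imat) k)"
  by (induction k) (simp_all add: tri_mId tri_mult)

lemma tri_diag_mult:
  assumes R: "R_trivial TYPE('m::{monoid_mult,finite})"
  and "tri A" "tri B"
  shows "mmul A (B::'m imat) \<sigma> \<sigma> = A \<sigma> \<sigma> * B \<sigma> \<sigma>"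
proof -
  have "(\<Sum>j\<in>UNIV. A \<sigma> j * B j \<sigma>) = A \<sigma> \<sigma> * B \<sigma> \<sigma>"
  proof -
    have "(\<Sum>j\<in>UNIV. A \<sigma> j * B j \<sigma>) = A \<sigma> \<sigma> * B \<sigma> \<sigma> + (\<Sum>j\<in>UNIV - {\<sigma>}. A \<sigma> j * B j \<sigma>)"
      by (rule sum.remove) auto
    also have "(\<Sum>j\<in>UNIV - {\<sigma>}. A \<sigma> j * B j \<sigma>) = 0"
    proof (rule sum.neutral, intro ballI)
      fix j assume j: "j \<in> UNIV - {\<sigma>}"
      show "A \<sigma> j * B j \<sigma> = 0"
      proof (rule ccontr)
        assume "A \<sigma> j * B j \<sigma> \<noteq> 0"
        then have "j \<in> range ((*) \<sigma>)" "\<sigma> \<in> range ((*) j)"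
          using assms(2,3) unfolding tri_def by auto
        then have "j = \<sigma>" by (rule Rtriv_eq[OF R])
        with j show False by simp
      qed
    qed
    finally show ?thesis by simp
  qed
  then show ?thesis by (simp add: mmul_def)
qed

lemma max_not_in:
  assumes R: "R_trivial TYPE('m::{monoid_mult,finite})"
  and k: "k \<in> S" "k \<noteq> \<sigma>" and mx: "\<forall>\<tau>\<in>S. card (range ((*) \<tau>)) \<le> card (range ((*) (\<sigma>::'m)))"
  shows "\<sigma> \<notin> range ((*) k)"
proof
  assume "\<sigma> \<in> range ((*) k)"
  then have sub: "range ((*) \<sigma>) \<subseteq> range ((*) k)" by (auto simp: mult.assoc)
  moreover have "card (range ((*) k)) \<le> card (range ((*) \<sigma>))" using mx k by blast
  ultimately have "range ((*) \<sigma>) = range ((*) k)"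
    using card_subset_eq[of "range ((*) k)" "range ((*) \<sigma>)"] by (simp add: antisym card_mono)
  then have "\<sigma> = k" using R unfolding R_trivial_def by blast
  with k show False by simp
qed

lemma supp_step:
  assumes R: "R_trivial TYPE('m::{monoid_mult,finite})"
  and C: "tri C" "C \<sigma> \<sigma> = 0"
  and S: "\<forall>\<tau>\<in>S. range ((*) \<tau>) \<subseteq> S"
  and mx: "\<forall>\<tau>\<in>S. card (range ((*) \<tau>)) \<le> card (range ((*) (\<sigma>::'m)))"
  and B: "\<forall>i j. B i j \<noteq> 0 \<longrightarrow> j \<in> S"
  shows "\<forall>i j. mmul B C i j \<noteq> 0 \<longrightarrow> j \<in> S - {\<sigma>}"
proof (intro allI impI)
  fix i j assume nz: "mmul B C i j \<noteq> 0"
  then obtain k where "B i k * C k j \<noteq> 0" unfolding mmul_def by (meson sum.neutral)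
  then have "k \<in> S" "j \<in> range ((*) k)" using B C(1) unfolding tri_def by auto
  then have jS: "j \<in> S" using S by blast
  have "j \<noteq> \<sigma>"
  proof
    assume js: "j = \<sigma>"
    have "mmul B C i j = 0" unfolding mmul_def
    proof (rule sum.neutral, intro ballI)
      fix k
      show "B i k * C k j = 0"
      proof (cases "B i k = 0")
        case False
        then have kS: "k \<in> S" using B by blast
        show ?thesis
        proof (cases "k = \<sigma>")
          case True then show ?thesis using js C by simp
        next
          case False
          then have "\<sigma> \<notin> range ((*) k)" using max_not_in[OF R kS False mx] by blast
          then have "C k \<sigma> = 0" using C(1) unfolding tri_def by blast
          then show ?thesis using js by simp
        qed
      qed simp
    qed
    with nz show False by simp
  qed
  with jS show "j \<in> S - {\<sigma>}" by simp
qed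

lemma nilp_gen:
  assumes R: "R_trivial TYPE('m::{monoid_mult,finite})"
  and triA: "tri (A :: 'm imat)" and d01: "\<forall>\<sigma>. A \<sigma> \<sigma> = 0 \<or> A \<sigma> \<sigma> = 1"
  shows "(\<forall>\<tau>\<in>S. range ((*) \<tau>) \<subseteq> S) \<Longrightarrow> (\<forall>i j. Rep_sq B i j \<noteq> 0 \<longrightarrow> j \<in> S) \<Longrightarrow>
    B * Abs_sq A ^ card {\<sigma>\<in>S. A \<sigma> \<sigma> = 0} * (Abs_sq A - 1) ^ card {\<sigma>\<in>S. A \<sigma> \<sigma> = 1} = 0"
proof (induction "card S" arbitrary: S B rule: less_induct)
  case less
  let ?M = "Abs_sq A"
  have RA: "Rep_sq ?M = A" by (simp add: Abs_sq_inverse)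
  show ?case
  proof (cases "S = {}")
    case True
    then have "Rep_sq B = mzero" using less.prems(2) by (auto simp: mzero_def fun_eq_iff)
    moreover have "Rep_sq (0::'m sq) = mzero" by (rule Rep_zero)
    ultimately have "B = 0" using Rep_sq_inject[of B 0] by simp
    then show ?thesis by simp
  next
    case False
    let ?f = "\<lambda>\<tau>. card (range ((*) (\<tau>::'m)))"
    have fin: "finite S" by simp
    obtain \<sigma> where sS: "\<sigma> \<in> S" and fs: "?f \<sigma> = Max (?f ` S)"
      using Max_in[of "?f ` S"] False fin by fastforce
    have mx: "\<forall>\<tau>\<in>S. ?f \<tau> \<le> ?f \<sigma>" using fs fin by simp
    define S' where "S' = S - {\<sigma>}"
    have cl': "\<forall>\<tau>\<in>S'. range ((*) \<tau>) \<subseteq> S'"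
      using less.prems(1) max_not_in[OF R _ _ mx] unfolding S'_def by blast
    have cS': "card S' < card S" unfolding S'_def using sS fin card_gt_0_iff[of S] by auto
    have commM: "?M * (?M - 1) = (?M - 1) * ?M" by (simp add: algebra_simps)
    show ?thesis
    proof (cases "A \<sigma> \<sigma> = 0")
      case True
      have z: "{\<tau>\<in>S. A \<tau> \<tau> = 0} = insert \<sigma> {\<tau>\<in>S'. A \<tau> \<tau> = 0}" "\<sigma> \<notin> {\<tau>\<in>S'. A \<tau> \<tau> = 0}"
        using sS True unfolding S'_def by auto
      have o: "{\<tau>\<in>S. A \<tau> \<tau> = 1} = {\<tau>\<in>S'. A \<tau> \<tau> = 1}"
        using sS True unfolding S'_def by auto
      have supp: "\<forall>i j. Rep_sq (B * ?M) i j \<noteq> 0 \<longrightarrow> j \<in> S'"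
        unfolding S'_def times_sq.rep_eq RA
        by (rule supp_step[OF R triA True less.prems(1) mx less.prems(2)])
      have IH: "(B * ?M) * ?M ^ card {\<tau>\<in>S'. A \<tau> \<tau> = 0} * (?M - 1) ^ card {\<tau>\<in>S'. A \<tau> \<tau> = 1} = 0"
        by (rule less.hyps[OF cS' cl' supp])
      have cz: "card {\<tau>\<in>S. A \<tau> \<tau> = 0} = Suc (card {\<tau>\<in>S'. A \<tau> \<tau> = 0})"
        using z by simp
      show ?thesis using IH by (simp only: cz o power_Suc mult.assoc)
    next
      case False
      then have T1: "A \<sigma> \<sigma> = 1" using d01 by blast
      have o: "{\<tau>\<in>S. A \<tau> \<tau> = 1} = insert \<sigma> {\<tau>\<in>S'. A \<tau> \<tau> = 1}" "\<sigma> \<notin> {\<tau>\<in>S'. A \<tau> \<tau> = 1}"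
        using sS T1 unfolding S'_def by auto
      have z: "{\<tau>\<in>S. A \<tau> \<tau> = 0} = {\<tau>\<in>S'. A \<tau> \<tau> = 0}"
        using sS T1 unfolding S'_def by auto
      have triC: "tri (msub A mId)" by (rule tri_msub[OF triA tri_mId])
      have C0: "msub A mId \<sigma> \<sigma> = 0" using T1 by (simp add: msub_def mId_def)
      have supp: "\<forall>i j. Rep_sq (B * (?M - 1)) i j \<noteq> 0 \<longrightarrow> j \<in> S'"
        unfolding S'_def times_sq.rep_eq minus_sq.rep_eq one_sq.rep_eq RA
        by (rule supp_step[OF R triC C0 less.prems(1) mx less.prems(2)])
      have IH: "(B * (?M - 1)) * ?M ^ card {\<tau>\<in>S'. A \<tau> \<tau> = 0} * (?M - 1) ^ card {\<tau>\<in>S'. A \<tau> \<tau> = 1} = 0"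
        by (rule less.hyps[OF cS' cl' supp])
      have pc: "?M ^ k * (?M - 1) = (?M - 1) * ?M ^ k" for k
        by (rule power_commuting_commutes[OF commM])
      have "B * ?M ^ card {\<tau>\<in>S. A \<tau> \<tau> = 0} * (?M - 1) ^ card {\<tau>\<in>S. A \<tau> \<tau> = 1}
          = B * (?M ^ card {\<tau>\<in>S'. A \<tau> \<tau> = 0} * (?M - 1)) * (?M - 1) ^ card {\<tau>\<in>S'. A \<tau> \<tau> = 1}"
        using o by (simp add: z mult.assoc)
      also have "\<dots> = 0" using IH by (simp add: pc mult.assoc)
      finally show ?thesis .
    qed
  qed
qed



lemma Rep_one: "Rep_sq (1::'m::finite sq) = mId"
  by transfer rule
lemma Rep_times: "Rep_sq (A * B) = mmul (Rep_sq A) (Rep_sq (B::'m::finite sq))"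
  by transfer rule
lemma Rep_minus: "Rep_sq (A - B) = msub (Rep_sq A) (Rep_sq (B::'m::finite sq))"
  by transfer rule
lemma RepAbs[simp]: "Rep_sq (Abs_sq A) = A"
  by (simp add: Abs_sq_inverse)

lemma nilp:
  assumes R: "R_trivial TYPE('m::{monoid_mult,finite})"
  and triA: "tri (A :: 'm imat)" and d01: "\<forall>\<sigma>. A \<sigma> \<sigma> = 0 \<or> A \<sigma> \<sigma> = 1"
  shows "Abs_sq A ^ (card (UNIV::'m set) - dnum A) * (Abs_sq A - 1) ^ dnum A = 0"
proof -
  have "1 * Abs_sq A ^ card {\<sigma>\<in>UNIV. A \<sigma> \<sigma> = 0} * (Abs_sq A - 1) ^ card {\<sigma>\<in>UNIV. A \<sigma> \<sigma> = 1} = 0"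
    by (rule nilp_gen[OF R triA d01]) auto
  moreover have "{\<sigma>\<in>UNIV. A \<sigma> \<sigma> = 1} = Dset A" by (simp add: Dset_def)
  moreover have "{\<sigma>\<in>UNIV. A \<sigma> \<sigma> = 0} = UNIV - Dset A" using d01 by (auto simp: Dset_def)
  ultimately show ?thesis by (simp add: dnum_def card_Diff_subset)
qed

lemma idem_pow: "(M::'r::monoid_mult) * M = M \<Longrightarrow> M ^ Suc k = M"
  by (induction k) (simp_all add: mult.assoc[symmetric])

lemma zero_diag_idem:
  assumes R: "R_trivial TYPE('m::{monoid_mult,finite})"
  and X: "X \<in> (UZ :: 'm imat set)" "mmul X X = X" "\<forall>\<kappa>. X \<kappa> \<kappa> = 0"
  shows "X = mzero"
proof -
  let ?M = "Abs_sq X"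
  have D: "dnum X = 0" using X(3) by (simp add: dnum_def Dset_def)
  have "?M ^ card (UNIV::'m set) = 0"
    using nilp[OF R UZ_tri[OF X(1)]] X(3) D by simp
  moreover have "?M * ?M = ?M"
    using X(2) by (metis RepAbs Rep_sq_inverse Rep_times)
  moreover have "card (UNIV::'m set) = Suc (card (UNIV::'m set) - 1)"
    by (simp add: Suc_pred finite_UNIV_card_ge_0)
  ultimately have "?M = 0" by (metis idem_pow)
  then show ?thesis by (metis RepAbs Rep_zero)
qed

lemma int01: "(x::int) * x = x \<Longrightarrow> x = 0 \<or> x = 1"
proof -
  assume "x * x = x"
  then have "x * (x - 1) = 0" by (simp add: algebra_simps)
  then show ?thesis by simp
qed

lemma diag_mpow:
  assumes R: "R_trivial TYPE('m::{monoid_mult,finite})" and "tri A"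
  shows "mpow (A::'m imat) k \<sigma> \<sigma> = (A \<sigma> \<sigma>) ^ k"
  by (induction k) (simp_all add: mId_def tri_diag_mult[OF R tri_mpow[OF assms(2)] assms(2)])

lemma poly_part:
  fixes z m a b :: nat
  assumes "z \<le> a" "m \<le> b"
  defines "x \<equiv> [:0,1:] :: int poly"
  shows "x ^ z * (x - 1) ^ m dvd (1 - (1 - x^a)^b) * (1 - (1 - x^a)^b) - (1 - (1 - x^a)^b)"
proof -
  define y where "y = x ^ a"
  define w where "w = (1 - y) ^ b"
  have h1: "1 - w = y * (\<Sum>k<b. (1-y)^k)"
    unfolding w_def using one_diff_power_eq[of "1-y" b] by simp
  have d1: "x ^ z dvd 1 - w"
    unfolding h1 y_def by (rule dvd_mult2, rule le_imp_power_dvd[OF assms(1)])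
  have "1 - y = (1 - x) * (\<Sum>k<a. x^k)" unfolding y_def by (rule one_diff_power_eq)
  then have "1 - x dvd 1 - y" by simp
  moreover have "x - 1 dvd 1 - x" by (metis dvd_minus_iff minus_diff_eq dvd_refl)
  ultimately have "x - 1 dvd 1 - y" by (rule dvd_trans[rotated])
  then have "(x - 1) ^ m dvd (1 - y) ^ m" by (rule dvd_power_same)
  also have "\<dots> dvd w" unfolding w_def by (rule le_imp_power_dvd[OF assms(2)])
  finally have d2: "(x - 1) ^ m dvd w" .
  have "x ^ z * (x - 1) ^ m dvd (1 - w) * w" by (rule mult_dvd_mono[OF d1 d2])
  moreover have "(1 - w) * (1 - w) - (1 - w) = - ((1 - w) * w)" by (simp add: algebra_simps)
  ultimately show ?thesis unfolding w_def y_def by (metis dvd_minus_iff)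
qed

lemma part3_idem:
  assumes R: "R_trivial TYPE('m::{monoid_mult,finite})"
  and U: "U \<in> (UZ :: 'm imat set)" and d01: "\<forall>\<sigma>. U \<sigma> \<sigma> = 0 \<or> U \<sigma> \<sigma> = 1"
  and ab: "a \<ge> card (UNIV :: 'm set) - dnum U" "b \<ge> dnum U"
  shows "idempotent_mat (Pab a b U)"
proof -
  let ?M = "Abs_sq U"
  let ?z = "card (UNIV :: 'm set) - dnum U" and ?o = "dnum U"
  define x where "x = ([:0,1:] :: int poly)"
  define P where "P = 1 - (1 - x^a)^b"
  obtain q where q: "P * P - P = x ^ ?z * (x - 1) ^ ?o * q"
    using poly_part[OF ab] unfolding P_def x_def by (elim dvdE) blast
  have "peval (P * P - P) ?M = peval (x ^ ?z * (x - 1) ^ ?o) ?M * peval q ?M"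
    by (simp only: q peval_mult)
  also have "peval (x ^ ?z * (x - 1) ^ ?o) ?M = ?M ^ ?z * (?M - 1) ^ ?o"
    by (simp add: peval_mult peval_power peval_diff x_def peval_x)
  also have "\<dots> = 0" by (rule nilp[OF R UZ_tri[OF U] d01])
  finally have "peval P ?M * peval P ?M = peval P ?M"
    by (simp add: peval_mult peval_diff)
  moreover have "peval P ?M = 1 - (1 - ?M ^ a) ^ b"
    by (simp add: P_def peval_power peval_diff x_def peval_x)
  moreover have "Rep_sq (1 - (1 - ?M ^ a) ^ b) = Pab a b U"
    by (simp add: Pab_def Rep_minus Rep_pow Rep_one)
  ultimately show ?thesis unfolding idempotent_mat_def
    by (metis Rep_times)
qed

lemma part3_diag:
  assumes R: "R_trivial TYPE('m::{monoid_mult,finite})"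
  and U: "U \<in> (UZ :: 'm imat set)" and d01: "\<forall>\<sigma>. U \<sigma> \<sigma> = 0 \<or> U \<sigma> \<sigma> = 1"
  and ab: "a \<ge> card (UNIV :: 'm set) - dnum U" "b \<ge> dnum U"
  shows "Pab a b U \<sigma> \<sigma> = U \<sigma> \<sigma>"
proof -
  have tU: "tri U" by (rule UZ_tri[OF U])
  have t2: "tri (msub mId (mpow U a))" by (rule tri_msub[OF tri_mId tri_mpow[OF tU]])
  have e: "Pab a b U \<sigma> \<sigma> = 1 - (1 - U \<sigma> \<sigma> ^ a) ^ b"
  proof -
    have "Pab a b U \<sigma> \<sigma> = 1 - mpow (msub mId (mpow U a)) b \<sigma> \<sigma>"
      by (simp add: Pab_def msub_def mId_def)
    also have "mpow (msub mId (mpow U a)) b \<sigma> \<sigma> = (msub mId (mpow U a) \<sigma> \<sigma>) ^ b"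
      by (rule diag_mpow[OF R t2])
    also have "msub mId (mpow U a) \<sigma> \<sigma> = 1 - U \<sigma> \<sigma> ^ a"
      by (simp add: msub_def mId_def diag_mpow[OF R tU])
    finally show ?thesis .
  qed
  show ?thesis
  proof (cases "U \<sigma> \<sigma> = 1")
    case True
    then have "\<sigma> \<in> Dset U" by (simp add: Dset_def)
    then have "dnum U > 0" unfolding dnum_def by (auto simp: card_gt_0_iff)
    then have "b > 0" using ab by simp
    then show ?thesis using e True by simp
  next
    case False
    then have U0: "U \<sigma> \<sigma> = 0" using d01 by blast
    then have "\<sigma> \<notin> Dset U" by (simp add: Dset_def)
    then have "Dset U \<subset> UNIV" by blast
    then have "dnum U < card (UNIV :: 'm set)" unfolding dnum_def by (simp add: psubset_card_mono)
    then have "a > 0" using ab by simp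
    then show ?thesis using e U0 by (simp add: zero_power)
  qed
qed

theorem mainTheorem6:
  assumes "R_trivial TYPE('m::{monoid_mult,finite})"
  shows "(\<forall>E \<in> (UZ :: 'm imat set). idempotent_mat E \<longrightarrow>
            (\<forall>\<sigma>. E \<sigma> \<sigma> = 0 \<or> E \<sigma> \<sigma> = 1))
       \<and> (\<forall>E \<in> (UZ :: 'm imat set). idempotent_mat E
            \<longrightarrow> (\<exists>\<sigma>. Dset E = {\<kappa>. loop_equiv \<kappa> \<sigma>})
            \<longrightarrow> (\<forall>X \<in> UZ. \<forall>Y \<in> UZ.
                   E = madd X Y \<and> idempotent_mat X \<and> idempotent_mat Y
                   \<and> mmul X Y = mzero \<and> mmul Y X = mzero
                   \<longrightarrow> X = mzero \<or> Y = mzero))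
       \<and> (\<forall>U \<in> (UZ :: 'm imat set). \<forall>a b :: nat.
            (\<forall>\<sigma>. U \<sigma> \<sigma> = 0 \<or> U \<sigma> \<sigma> = 1)
            \<and> a \<ge> card (UNIV :: 'm set) - dnum U \<and> b \<ge> dnum U
            \<longrightarrow> idempotent_mat (Pab a b U)
                \<and> (\<forall>\<sigma>. Pab a b U \<sigma> \<sigma> = U \<sigma> \<sigma>))"
proof -
  note R = assms
  have P1: "\<forall>\<sigma>. E \<sigma> \<sigma> = 0 \<or> E \<sigma> \<sigma> = 1" if "E \<in> UZ" "idempotent_mat E" for E :: "'m imat"
  proof
    fix \<sigma>
    have "E \<sigma> \<sigma> * E \<sigma> \<sigma> = E \<sigma> \<sigma>"
      using tri_diag_mult[OF R UZ_tri[OF that(1)] UZ_tri[OF that(1)], of \<sigma>] that(2)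
      unfolding idempotent_mat_def by simp
    then show "E \<sigma> \<sigma> = 0 \<or> E \<sigma> \<sigma> = 1" by (rule int01)
  qed
  have P2: "X = mzero \<or> Y = mzero"
    if E: "E \<in> UZ" "idempotent_mat E" and s: "Dset E = {\<kappa>. loop_equiv \<kappa> \<sigma>0}"
    and XY: "X \<in> UZ" "Y \<in> UZ" "E = madd X Y" "idempotent_mat X" "idempotent_mat Y"
    for E X Y :: "'m imat" and \<sigma>0
  proof (rule ccontr)
    assume "\<not> (X = mzero \<or> Y = mzero)"
    then have "\<not> (\<forall>\<kappa>. X \<kappa> \<kappa> = 0)" "\<not> (\<forall>\<kappa>. Y \<kappa> \<kappa> = 0)"
      using zero_diag_idem[OF R XY(1)] zero_diag_idem[OF R XY(2)] XY(4,5)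
      unfolding idempotent_mat_def by blast+
    then obtain k1 k2 where k1: "X k1 k1 = 1" and k2: "Y k2 k2 = 1"
      using P1[OF XY(1) XY(4)] P1[OF XY(2) XY(5)] by blast
    have dE: "\<And>k. E k k = X k k + Y k k" using XY(3) by (simp add: madd_def)
    have e1: "Y k1 k1 = 0" and Ek: "E k1 k1 = 1" "E k2 k2 = 1"
    proof -
      have a1: "E k1 k1 = 0 \<or> E k1 k1 = 1" "E k2 k2 = 0 \<or> E k2 k2 = 1" using P1[OF E] by blast+
      have a2: "Y k1 k1 = 0 \<or> Y k1 k1 = 1" using P1[OF XY(2) XY(5)] by blast
      have a3: "X k2 k2 = 0 \<or> X k2 k2 = 1" using P1[OF XY(1) XY(4)] by blast
      have a4: "E k1 k1 = X k1 k1 + Y k1 k1" "E k2 k2 = X k2 k2 + Y k2 k2" using dE by blast+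
      show "Y k1 k1 = 0" "E k1 k1 = 1" "E k2 k2 = 1" using a1 a2 a3 a4 k1 k2 by linarith+
    qed
    then have "k1 \<in> Dset E" "k2 \<in> Dset E" by (simp_all add: Dset_def)
    then have "Lset k1 = Lset k2" using s by (simp add: loop_equiv_def)
    then have "Y k1 k1 = Y k2 k2" by (rule UZ_diag[OF XY(2)])
    with e1 k2 show False by simp
  qed
  have G1: "\<forall>E \<in> (UZ :: 'm imat set). idempotent_mat E \<longrightarrow> (\<forall>\<sigma>. E \<sigma> \<sigma> = 0 \<or> E \<sigma> \<sigma> = 1)"
    using P1 by blast
  have G2: "\<forall>E \<in> (UZ :: 'm imat set). idempotent_mat E
            \<longrightarrow> (\<exists>\<sigma>. Dset E = {\<kappa>. loop_equiv \<kappa> \<sigma>})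
            \<longrightarrow> (\<forall>X \<in> UZ. \<forall>Y \<in> UZ.
                   E = madd X Y \<and> idempotent_mat X \<and> idempotent_mat Y
                   \<and> mmul X Y = mzero \<and> mmul Y X = mzero
                   \<longrightarrow> X = mzero \<or> Y = mzero)"
  proof (intro ballI impI)
    fix E X Y :: "'m imat"
    assume "E \<in> UZ" "idempotent_mat E" "\<exists>\<sigma>. Dset E = {\<kappa>. loop_equiv \<kappa> \<sigma>}" "X \<in> UZ" "Y \<in> UZ"
      and h: "E = madd X Y \<and> idempotent_mat X \<and> idempotent_mat Y \<and> mmul X Y = mzero \<and> mmul Y X = mzero"
    then obtain \<sigma>0 where "Dset E = {\<kappa>. loop_equiv \<kappa> \<sigma>0}" by blast
    moreover have "E = madd X Y" "idempotent_mat X" "idempotent_mat Y" using h by simp_all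
    ultimately show "X = mzero \<or> Y = mzero"
      using P2 \<open>E \<in> UZ\<close> \<open>idempotent_mat E\<close> \<open>X \<in> UZ\<close> \<open>Y \<in> UZ\<close> by blast
  qed
  have G3: "\<forall>U \<in> (UZ :: 'm imat set). \<forall>a b :: nat.
            (\<forall>\<sigma>. U \<sigma> \<sigma> = 0 \<or> U \<sigma> \<sigma> = 1)
            \<and> a \<ge> card (UNIV :: 'm set) - dnum U \<and> b \<ge> dnum U
            \<longrightarrow> idempotent_mat (Pab a b U)
                \<and> (\<forall>\<sigma>. Pab a b U \<sigma> \<sigma> = U \<sigma> \<sigma>)"
  proof (intro ballI allI impI)
    fix U :: "'m imat" and a b :: nat
    assume U: "U \<in> UZ" and h: "(\<forall>\<sigma>. U \<sigma> \<sigma> = 0 \<or> U \<sigma> \<sigma> = 1)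
            \<and> a \<ge> card (UNIV :: 'm set) - dnum U \<and> b \<ge> dnum U"
    then have h1: "\<forall>\<sigma>. U \<sigma> \<sigma> = 0 \<or> U \<sigma> \<sigma> = 1" and h2: "a \<ge> card (UNIV :: 'm set) - dnum U" and h3: "b \<ge> dnum U"
      by simp_all
    show "idempotent_mat (Pab a b U) \<and> (\<forall>\<sigma>. Pab a b U \<sigma> \<sigma> = U \<sigma> \<sigma>)"
      using part3_idem[OF R U h1 h2 h3] part3_diag[OF R U h1 h2 h3] by blast
  qed
  show ?thesis by (rule conjI[OF G1 conjI[OF G2 G3]])
qed

end
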